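(* Let $G=(V,E)$ be a tree on $n$ vertices, $\alpha\in(0,1)$, $\bm q$ a probability distribution on $V$, and $v\in V$ with $d_v=|\Gamma(v)|$. Let $W=V\setminus(\Gamma(v)\cup\{v\})$, and define $F(\bm x,\bm y)$ for $\bm x\in\{0,1\}^{\Gamma(v)}\setminus\{\bm 0\}$, $\bm y\in\{0,1\}^{W}$ as below. Fix an ordering of $W$ in which $e_u$ is nonincreasing (ties broken arbitrarily) and for $0\le m\le |W|$ let $\hat{\bm y}^{m}\in\{0,1\}^W$ be the indicator vector of the first $m$ elements in this ordering. Then for every $l$ with $1\le l\le n-1$, $$\max\{F(\bm x,\bm y): \bm 1^T\bm x+\bm 1^T\bm y=l\}=\max\{F(\bm x,\hat{\bm y}^{l_2}): \bm 1^T\bm x=l_1,\ 1\le l_1\le d_v,\ 0\le l_2\le |W|,\ l_1+l_2=l\},$$ where both maxima are over the feasible $\bm x\neq\bm 0$ (and $\bm y$) satisfying the stated constraints.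
   Context: Potentials: $\phi_{uv}$ is the probability that an $\alpha$-random walk on the tree (at each step, with probability $\alpha$ it jumps, otherwise moves to a uniformly random neighbour) started at $u$ visits $v$ before its first jump; $\phi_{vv}=1$ and $\phi_{uv}=\frac{1-\alpha}{|\Gamma(u)|}\sum_{w\in\Gamma(u)}\phi_{wv}$ for $u\ne v$, with $\Gamma(u)$ the neighbour set. Root the tree at $v$; for $i\in\Gamma(v)$ let $N_i$ be the vertex set of the subtree rooted at $i$ (including $i$); every $u\in W$ lies in $N_i\setminus\{i\}$ for exactly one $i\in\Gamma(v)$. Constants: $a_i=\alpha\sum_{u\in N_i}q_u\phi_{uv}$ and $c_i=(1-\alpha)\phi_{iv}$ for $i\in\Gamma(v)$; $e_u=(1-\alpha)\phi_{uv}$ for $u\in W$. The function (the PageRank of $v$ in the request-delete-model when $v$ keeps the edges to $\{i:x_i=1\}$ and adds outgoing arcs to $\{u:y_u=1\}$) is $$F(\bm x,\bm y)=(\bm 1^T\bm x+\bm 1^T\bm y)\,\frac{\sum_{i\in\Gamma(v)}a_ix_i}{\sum_{i\in\Gamma(v)}\Big((1-c_i)x_i+\sum_{u\in N_i\setminus\{i\}}(1-e_ux_i)\,y_u\Big)}.$$ *)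

theory Defs
  imports "HOL-Analysis.Analysis"
begin

definition graph :: "'a set \<Rightarrow> ('a \<Rightarrow> 'a \<Rightarrow> bool) \<Rightarrow> bool" where
  "graph V E \<longleftrightarrow> finite V \<and> (\<forall>u w. E u w \<longrightarrow> u \<in> V \<and> w \<in> V \<and> E w u \<and> u \<noteq> w)"

definition nbrs :: "'a set \<Rightarrow> ('a \<Rightarrow> 'a \<Rightarrow> bool) \<Rightarrow> 'a \<Rightarrow> 'a set" where
  "nbrs V E u = {w \<in> V. E u w}"

definition connected_graph :: "'a set \<Rightarrow> ('a \<Rightarrow> 'a \<Rightarrow> bool) \<Rightarrow> bool" where
  "connected_graph V E \<longleftrightarrow> (\<forall>u\<in>V. \<forall>w\<in>V. E\<^sup>*\<^sup>* u w)"

definition is_cycle :: "('a \<Rightarrow> 'a \<Rightarrow> bool) \<Rightarrow> 'a list \<Rightarrow> bool" where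
  "is_cycle E cs \<longleftrightarrow> length cs \<ge> 3 \<and> distinct cs \<and>
     (\<forall>i. Suc i < length cs \<longrightarrow> E (cs ! i) (cs ! Suc i)) \<and> E (last cs) (hd cs)"

definition tree :: "'a set \<Rightarrow> ('a \<Rightarrow> 'a \<Rightarrow> bool) \<Rightarrow> bool" where
  "tree V E \<longleftrightarrow> graph V E \<and> V \<noteq> {} \<and> connected_graph V E \<and> \<not> (\<exists>cs. is_cycle E cs)"

text \<open>Potentials phi_{uv} (as a function of u, for fixed target v): the solution of
  phi_vv = 1, phi_uv = (1-alpha)/|Gamma(u)| * sum_{w in Gamma(u)} phi_wv for u in V, u \<noteq> v.\<close>
definition phi :: "'a set \<Rightarrow> ('a \<Rightarrow> 'a \<Rightarrow> bool) \<Rightarrow> real \<Rightarrow> 'a \<Rightarrow> 'a \<Rightarrow> real" where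
  "phi V E \<alpha> v = (THE f. f v = 1 \<and>
     (\<forall>u\<in>V - {v}. f u = (1 - \<alpha>) / real (card (nbrs V E u)) * (\<Sum>w\<in>nbrs V E u. f w)) \<and>
     (\<forall>u. u \<notin> V \<longrightarrow> f u = 0))"

definition subtree :: "('a \<Rightarrow> 'a \<Rightarrow> bool) \<Rightarrow> 'a \<Rightarrow> 'a \<Rightarrow> 'a set" where
  "subtree E v i = {u. (\<lambda>a b. E a b \<and> a \<noteq> v \<and> b \<noteq> v)\<^sup>*\<^sup>* i u}"

definition W_set :: "'a set \<Rightarrow> ('a \<Rightarrow> 'a \<Rightarrow> bool) \<Rightarrow> 'a \<Rightarrow> 'a set" where
  "W_set V E v = V - (nbrs V E v \<union> {v})"

definition a_const :: "'a set \<Rightarrow> ('a \<Rightarrow> 'a \<Rightarrow> bool) \<Rightarrow> real \<Rightarrow> ('a \<Rightarrow> real) \<Rightarrow> 'a \<Rightarrow> 'a \<Rightarrow> real" where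
  "a_const V E \<alpha> q v i = \<alpha> * (\<Sum>u\<in>subtree E v i. q u * phi V E \<alpha> v u)"

definition c_const :: "'a set \<Rightarrow> ('a \<Rightarrow> 'a \<Rightarrow> bool) \<Rightarrow> real \<Rightarrow> 'a \<Rightarrow> 'a \<Rightarrow> real" where
  "c_const V E \<alpha> v i = (1 - \<alpha>) * phi V E \<alpha> v i"

definition e_const :: "'a set \<Rightarrow> ('a \<Rightarrow> 'a \<Rightarrow> bool) \<Rightarrow> real \<Rightarrow> 'a \<Rightarrow> 'a \<Rightarrow> real" where
  "e_const V E \<alpha> v u = (1 - \<alpha>) * phi V E \<alpha> v u"

definition F :: "'a set \<Rightarrow> ('a \<Rightarrow> 'a \<Rightarrow> bool) \<Rightarrow> real \<Rightarrow> ('a \<Rightarrow> real) \<Rightarrow> 'a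
                  \<Rightarrow> ('a \<Rightarrow> real) \<Rightarrow> ('a \<Rightarrow> real) \<Rightarrow> real" where
  "F V E \<alpha> q v x y =
     ((\<Sum>i\<in>nbrs V E v. x i) + (\<Sum>u\<in>W_set V E v. y u)) *
     ((\<Sum>i\<in>nbrs V E v. a_const V E \<alpha> q v i * x i) /
      (\<Sum>i\<in>nbrs V E v. (1 - c_const V E \<alpha> v i) * x i +
          (\<Sum>u\<in>subtree E v i - {i}. (1 - e_const V E \<alpha> v u * x i) * y u)))"

definition ind :: "'a set \<Rightarrow> 'a \<Rightarrow> real" where
  "ind S = (\<lambda>u. if u \<in> S then 1 else 0)"

end

theory Submission
  imports Defs
begin


lemma exch:
  fixes G W :: "'a set" and a c e :: "'a \<Rightarrow> real" and r :: "'a \<Rightarrow> 'a" and ws :: "'a list"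
  assumes fG: "finite G" and Wws: "set ws = W" and dws: "distinct ws"
    and srt: "sorted_wrt (\<lambda>x y. e x \<ge> e y) ws"
    and a0: "\<forall>i\<in>G. 0 \<le> a i" and c01: "\<forall>i\<in>G. 0 \<le> c i \<and> c i < 1"
    and e01: "\<forall>u\<in>W. 0 \<le> e u \<and> e u \<le> 1" and rG: "\<forall>u\<in>W. r u \<in> G \<and> e u \<le> c (r u)"
  shows "X \<subseteq> G \<Longrightarrow> X \<noteq> {} \<Longrightarrow> Y \<subseteq> W \<Longrightarrow> \<exists>X' k. X' \<subseteq> G \<and> X' \<noteq> {} \<and> k \<le> card W
     \<and> card X' + k = card X + card Y \<and>
     (\<Sum>i\<in>X. a i) / ((\<Sum>i\<in>X. 1 - c i) + (\<Sum>u\<in>Y. 1 - e u * ind X (r u)))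
     \<le> (\<Sum>i\<in>X'. a i) / ((\<Sum>i\<in>X'. 1 - c i) + (\<Sum>u\<in>set (take k ws). 1 - e u * ind X' (r u)))"
proof -
  define Dn where "Dn X Y = (\<Sum>i\<in>X. 1 - c i) + (\<Sum>u\<in>Y. 1 - e u * ind X (r u))" for X Y
  define An where "An X = (\<Sum>i\<in>X. a i)" for X
  define P where "P k = set (take k ws)" for k
  have fW: "finite W" using Wws by auto
  have Dpos: "0 < Dn X Y" if "X \<subseteq> G" "X \<noteq> {}" "Y \<subseteq> W" for X Y
  proof -
    have fX: "finite X" using that fG finite_subset by blast
    have "0 < (\<Sum>i\<in>X. 1 - c i)"
      using that fX c01 by (intro sum_pos) auto
    moreover have "0 \<le> (\<Sum>u\<in>Y. 1 - e u * ind X (r u))"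
      using that e01 by (intro sum_nonneg) (auto simp: ind_def)
    ultimately show ?thesis unfolding Dn_def by linarith
  qed
  have Anon: "0 \<le> An X" if "X \<subseteq> G" for X
    using that a0 unfolding An_def by (intro sum_nonneg) auto
  have cardP: "card (P k) = k" if "k \<le> card W" for k
    proof -
    have "card W = length ws" using dws Wws distinct_card by blast
    then show ?thesis using that dws unfolding P_def by (simp add: distinct_card)
  qed
  have PW: "P k \<subseteq> W" for k using Wws unfolding P_def by (meson set_take_subset)
  have srtP: "e y \<le> e u" if "u \<in> P k" "y \<in> W" "y \<notin> P k" for u y k
  proof -
    have "y \<in> set (drop k ws)" using that Wws unfolding P_def
      by (metis Un_iff append_take_drop_id set_append)
    moreover have "sorted_wrt (\<lambda>x y. e x \<ge> e y) (take k ws @ drop k ws)" using srt by simp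
    ultimately show ?thesis using that unfolding P_def sorted_wrt_append by blast
  qed
  have main: "\<forall>Y X. card Y * (card W + 1) + card (Y - P (card Y)) = n \<longrightarrow> X \<subseteq> G \<longrightarrow> X \<noteq> {} \<longrightarrow> Y \<subseteq> W \<longrightarrow> (\<exists>X' k. X' \<subseteq> G \<and> X' \<noteq> {} \<and> k \<le> card W
     \<and> card X' + k = card X + card Y \<and> An X / Dn X Y \<le> An X' / Dn X' (P k))" for n
  proof (induction n rule: less_induct)
    case (less n)
    {
    fix Y X assume mn: "card Y * (card W + 1) + card (Y - P (card Y)) = n" and less: "X \<subseteq> G" "X \<noteq> {}" "Y \<subseteq> W"
    note IHn = less.IH[rule_format, OF _ refl]
    have fX: "finite X" using less fG finite_subset by blast
    have fY: "finite Y" using less fW finite_subset by blast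
    have cY: "card Y \<le> card W" using less fW card_mono by blast
    have "\<exists>X' k. X' \<subseteq> G \<and> X' \<noteq> {} \<and> k \<le> card W
     \<and> card X' + k = card X + card Y \<and> An X / Dn X Y \<le> An X' / Dn X' (P k)"
    proof (cases "\<exists>y\<in>Y. r y \<notin> X")
      case True
      then obtain y where y: "y \<in> Y" "r y \<notin> X" by blast
      define j where "j = r y"
      define X1 where "X1 = insert j X"
      define Y1 where "Y1 = Y - {y}"
      have jG: "j \<in> G" using rG y less unfolding j_def by auto
      have X1: "X1 \<subseteq> G" "X1 \<noteq> {}" "Y1 \<subseteq> W" using less jG unfolding X1_def Y1_def by auto
      have cY1: "card Y1 = card Y - 1" "card Y \<ge> 1" using y fY unfolding Y1_def
        by (auto simp: card_gt_0_iff Suc_le_eq)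
      have meas: "card Y1 * (card W + 1) + card (Y1 - P (card Y1)) < card Y * (card W + 1) + card (Y - P (card Y))"
      proof -
        have "card (Y1 - P (card Y1)) \<le> card W" using X1(3) fW by (meson Diff_subset card_mono order_trans)
        then show ?thesis using cY1 by (cases "card Y") auto
      qed
      obtain X' k where IH: "X' \<subseteq> G" "X' \<noteq> {}" "k \<le> card W" "card X' + k = card X1 + card Y1"
        "An X1 / Dn X1 Y1 \<le> An X' / Dn X' (P k)"
        using IHn[OF meas[unfolded mn] X1] by blast
      have cX1: "card X1 = card X + 1" using y fX unfolding X1_def j_def by simp
      have A1: "An X \<le> An X1" using fX y a0 jG unfolding An_def X1_def j_def by simp
      have "Dn X1 Y1 \<le> Dn X Y"
      proof -
        have s1: "(\<Sum>i\<in>X1. 1 - c i) = (\<Sum>i\<in>X. 1 - c i) + (1 - c j)"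
          using fX y unfolding X1_def j_def by simp
        have s2: "(\<Sum>u\<in>Y. 1 - e u * ind X (r u)) = (\<Sum>u\<in>Y1. 1 - e u * ind X (r u)) + 1"
          using fY y unfolding Y1_def j_def by (simp add: sum.remove ind_def)
        have s3: "(\<Sum>u\<in>Y1. 1 - e u * ind X1 (r u)) \<le> (\<Sum>u\<in>Y1. 1 - e u * ind X (r u))"
          using X1(3) e01 by (intro sum_mono) (auto simp: ind_def X1_def)
        show ?thesis unfolding Dn_def using s1 s2 s3 c01 jG by auto
      qed
      then have "An X / Dn X Y \<le> An X1 / Dn X1 Y1"
        using Anon[OF less(1)] A1 Dpos[OF X1] by (intro frac_le) auto
      then show ?thesis using IH cX1 cY1 by (intro exI[of _ X'] exI[of _ k]) auto
    next
      case False
      hence rX: "\<forall>y\<in>Y. r y \<in> X" by blast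
      show ?thesis
      proof (cases "Y = P (card Y)")
        case True
        then show ?thesis using less cY by (intro exI[of _ X] exI[of _ "card Y"]) auto
      next
        case False
        have cP: "card (P (card Y)) = card Y" using cardP cY by blast
        have fP: "finite (P (card Y))" unfolding P_def by simp
        obtain y where y: "y \<in> Y" "y \<notin> P (card Y)"
          using False cP fP fY by (metis card_subset_eq subsetI)
        obtain u where u: "u \<in> P (card Y)" "u \<notin> Y"
          using False cP fP fY by (metis card_subset_eq subsetI)
        have uW: "u \<in> W" using u PW by blast
        have yW: "y \<in> W" using y less by blast
        have eyu: "e y \<le> e u" using srtP u y yW by blast
        show ?thesis
        proof (cases "r u \<in> X")
          case False
          define j where "j = r u"
          define X1 where "X1 = insert j X"
          define Y1 where "Y1 = Y - {y}"
          have jG: "j \<in> G" using rG uW unfolding j_def by auto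
          have X1: "X1 \<subseteq> G" "X1 \<noteq> {}" "Y1 \<subseteq> W" using less jG unfolding X1_def Y1_def by auto
          have cY1: "card Y1 = card Y - 1" "card Y \<ge> 1" using y fY unfolding Y1_def
            by (auto simp: card_gt_0_iff Suc_le_eq)
          have meas: "card Y1 * (card W + 1) + card (Y1 - P (card Y1)) < card Y * (card W + 1) + card (Y - P (card Y))"
          proof -
            have "card (Y1 - P (card Y1)) \<le> card W" using X1(3) fW by (meson Diff_subset card_mono order_trans)
            then show ?thesis using cY1 by (cases "card Y") auto
          qed
          obtain X' k where IH: "X' \<subseteq> G" "X' \<noteq> {}" "k \<le> card W" "card X' + k = card X1 + card Y1"
            "An X1 / Dn X1 Y1 \<le> An X' / Dn X' (P k)"
            using IHn[OF meas[unfolded mn] X1] by blast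
          have cX1: "card X1 = card X + 1" using False fX unfolding X1_def j_def by simp
          have A1: "An X \<le> An X1" using fX False a0 jG unfolding An_def X1_def j_def by simp
          have "Dn X1 Y1 \<le> Dn X Y"
          proof -
            have s1: "(\<Sum>i\<in>X1. 1 - c i) = (\<Sum>i\<in>X. 1 - c i) + (1 - c j)"
              using fX False unfolding X1_def j_def by simp
            have s2: "(\<Sum>u\<in>Y. 1 - e u * ind X (r u)) = (\<Sum>u\<in>Y1. 1 - e u * ind X (r u)) + (1 - e y)"
              using fY y rX unfolding Y1_def by (simp add: sum.remove ind_def)
            have s3: "(\<Sum>u\<in>Y1. 1 - e u * ind X1 (r u)) = (\<Sum>u\<in>Y1. 1 - e u * ind X (r u))"
              using rX unfolding Y1_def by (intro sum.cong) (auto simp: ind_def X1_def)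
            have "e u \<le> c j" using rG uW unfolding j_def by auto
            then show ?thesis unfolding Dn_def using s1 s2 s3 eyu by auto
          qed
          then have "An X / Dn X Y \<le> An X1 / Dn X1 Y1"
            using Anon[OF less(1)] A1 Dpos[OF X1] by (intro frac_le) auto
          then show ?thesis using IH cX1 cY1 by (intro exI[of _ X'] exI[of _ k]) auto
        next
          case True
          define Y1 where "Y1 = insert u (Y - {y})"
          have Y1: "Y1 \<subseteq> W" using less uW unfolding Y1_def by auto
          have cY1: "card Y1 = card Y" using y u fY unfolding Y1_def
            by (simp add: card_insert_if) (metis One_nat_def Suc_pred card_gt_0_iff empty_iff)
          have meas: "card Y1 * (card W + 1) + card (Y1 - P (card Y1)) < card Y * (card W + 1) + card (Y - P (card Y))"
          proof -
            have "Y1 - P (card Y) = (Y - P (card Y)) - {y}" using u unfolding Y1_def by auto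
            then have "card (Y1 - P (card Y)) < card (Y - P (card Y))"
              using y fY by (metis DiffI card_Diff1_less finite_Diff)
            then show ?thesis using cY1 by simp
          qed
          obtain X' k where IH: "X' \<subseteq> G" "X' \<noteq> {}" "k \<le> card W" "card X' + k = card X + card Y1"
            "An X / Dn X Y1 \<le> An X' / Dn X' (P k)"
            using IHn[OF meas[unfolded mn] less(1,2) Y1] by blast
          have "Dn X Y1 \<le> Dn X Y"
          proof -
            have s2: "(\<Sum>u\<in>Y. 1 - e u * ind X (r u)) = (\<Sum>u\<in>Y - {y}. 1 - e u * ind X (r u)) + (1 - e y)"
              using fY y rX by (simp add: sum.remove ind_def)
            have s3: "(\<Sum>u\<in>Y1. 1 - e u * ind X (r u)) = (\<Sum>u\<in>Y - {y}. 1 - e u * ind X (r u)) + (1 - e u)"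
              using fY u True unfolding Y1_def by (simp add: ind_def)
            show ?thesis unfolding Dn_def using s2 s3 eyu by auto
          qed
          then have "An X / Dn X Y \<le> An X / Dn X Y1"
            using Anon[OF less(1)] Dpos[OF less(1,2) Y1] by (intro frac_le) auto
          then show ?thesis using IH cY1 by (intro exI[of _ X'] exI[of _ k]) auto
        qed
      qed
    qed
  }
  then show ?case by blast
  qed
  assume "X \<subseteq> G" "X \<noteq> {}" "Y \<subseteq> W"
  from main[rule_format, OF refl this] show ?thesis unfolding An_def Dn_def P_def by blast
qed



definition Tmap :: "'a set \<Rightarrow> ('a \<Rightarrow> 'a \<Rightarrow> bool) \<Rightarrow> real \<Rightarrow> 'a \<Rightarrow> ('a \<Rightarrow> real) \<Rightarrow> 'a \<Rightarrow> real" where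
  "Tmap V E \<alpha> v g u = (if u = v then 1 else if u \<in> V then
      (1 - \<alpha>) / real (card (nbrs V E u)) * (\<Sum>w\<in>nbrs V E u. g w) else 0)"

lemma finite_nbrs: "finite V \<Longrightarrow> finite (nbrs V E u)"
  unfolding nbrs_def by simp

lemma Tmap_contr:
  assumes fV: "finite V" and a: "0 < \<alpha>" "\<alpha> < 1" and K: "\<forall>w. \<bar>g w - h w\<bar> \<le> K"
  shows "\<bar>Tmap V E \<alpha> v g u - Tmap V E \<alpha> v h u\<bar> \<le> (1 - \<alpha>) * K"
proof -
  have Kv: "\<bar>g v - h v\<bar> \<le> K" using K by blast
  have K0: "0 \<le> K" by (rule order_trans[OF abs_ge_zero Kv])
  show ?thesis
  proof (cases "u \<noteq> v \<and> u \<in> V")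
    case True
    define N where "N = nbrs V E u"
    have fN: "finite N" unfolding N_def by (rule finite_nbrs[OF fV])
    have "\<bar>(\<Sum>w\<in>N. g w) - (\<Sum>w\<in>N. h w)\<bar> = \<bar>\<Sum>w\<in>N. g w - h w\<bar>" by (simp add: sum_subtractf)
    also have "\<dots> \<le> (\<Sum>w\<in>N. \<bar>g w - h w\<bar>)" by (rule sum_abs)
    also have "\<dots> \<le> of_nat (card N) * K" by (rule sum_bounded_above) (use K in blast)
    finally have s: "\<bar>(\<Sum>w\<in>N. g w) - (\<Sum>w\<in>N. h w)\<bar> \<le> real (card N) * K" .
    have "Tmap V E \<alpha> v g u - Tmap V E \<alpha> v h u = (1 - \<alpha>) / real (card N) * ((\<Sum>w\<in>N. g w) - (\<Sum>w\<in>N. h w))"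
      using True unfolding Tmap_def N_def[symmetric] by (simp add: right_diff_distrib)
    then have "\<bar>Tmap V E \<alpha> v g u - Tmap V E \<alpha> v h u\<bar> = \<bar>(1 - \<alpha>) / real (card N)\<bar> * \<bar>(\<Sum>w\<in>N. g w) - (\<Sum>w\<in>N. h w)\<bar>"
      by (simp only: abs_mult)
    also have "\<bar>(1 - \<alpha>) / real (card N)\<bar> = (1 - \<alpha>) / real (card N)" using a by simp
    finally have "\<bar>Tmap V E \<alpha> v g u - Tmap V E \<alpha> v h u\<bar> = (1 - \<alpha>) / real (card N) * \<bar>(\<Sum>w\<in>N. g w) - (\<Sum>w\<in>N. h w)\<bar>" .
    also have "\<dots> \<le> (1 - \<alpha>) / real (card N) * (real (card N) * K)"
      using s a by (intro mult_left_mono) auto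
    also have "\<dots> \<le> (1 - \<alpha>) * K"
    proof (cases "card N = 0")
      case True then show ?thesis using a K0 by simp
    next
      case False then show ?thesis by simp
    qed
    finally show ?thesis .
  next
    case False
    then show ?thesis using a K0 unfolding Tmap_def by auto
  qed
qed

lemma Tmap_01:
  assumes fV: "finite V" and a: "0 < \<alpha>" "\<alpha> < 1" and g: "\<forall>w. 0 \<le> g w \<and> g w \<le> 1"
  shows "0 \<le> Tmap V E \<alpha> v g u \<and> Tmap V E \<alpha> v g u \<le> 1"
proof (cases "u \<noteq> v \<and> u \<in> V")
  case True
  define N where "N = nbrs V E u"
  have fN: "finite N" unfolding N_def by (rule finite_nbrs[OF fV])
  have s0: "0 \<le> (\<Sum>w\<in>N. g w)" by (rule sum_nonneg) (use g in blast)
  have s1': "(\<Sum>w\<in>N. g w) \<le> of_nat (card N) * 1" by (rule sum_bounded_above) (use g in blast)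
  then have s1: "(\<Sum>w\<in>N. g w) \<le> real (card N)" by simp
  have "(1 - \<alpha>) / real (card N) * (\<Sum>w\<in>N. g w) \<le> 1"
  proof (cases "card N = 0")
    case False
    have "(1 - \<alpha>) / real (card N) * (\<Sum>w\<in>N. g w) \<le> (1 - \<alpha>) / real (card N) * real (card N)"
      using s1 a by (intro mult_left_mono) auto
    also have "\<dots> = 1 - \<alpha>" using False by simp
    also have "\<dots> \<le> 1" using a by simp
    finally show ?thesis .
  qed simp
  moreover have "0 \<le> (1 - \<alpha>) / real (card N) * (\<Sum>w\<in>N. g w)" using a s0 by simp
  ultimately show ?thesis using True unfolding Tmap_def N_def[symmetric] by simp
next
  case False
  then show ?thesis unfolding Tmap_def by auto
qed

lemma Tmap_fix_iff:
  "v \<in> V \<Longrightarrow> (Tmap V E \<alpha> v f = f) \<longleftrightarrow> (f v = 1 \<and>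
     (\<forall>u\<in>V - {v}. f u = (1 - \<alpha>) / real (card (nbrs V E u)) * (\<Sum>w\<in>nbrs V E u. f w)) \<and>
     (\<forall>u. u \<notin> V \<longrightarrow> f u = 0))"
proof
  assume v: "v \<in> V"
  {
    assume h: "Tmap V E \<alpha> v f = f"
    have hu: "f u = Tmap V E \<alpha> v f u" for u using h by simp
    have "f v = 1" using hu[of v] unfolding Tmap_def by simp
    moreover have "\<forall>u\<in>V - {v}. f u = (1 - \<alpha>) / real (card (nbrs V E u)) * (\<Sum>w\<in>nbrs V E u. f w)"
    proof
      fix u assume "u \<in> V - {v}" then show "f u = (1 - \<alpha>) / real (card (nbrs V E u)) * (\<Sum>w\<in>nbrs V E u. f w)"
        using hu[of u] unfolding Tmap_def by simp
    qed
    moreover have "\<forall>u. u \<notin> V \<longrightarrow> f u = 0"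
    proof (intro allI impI)
      fix u assume "u \<notin> V" then show "f u = 0" using hu[of u] v unfolding Tmap_def by auto
    qed
    ultimately show "f v = 1 \<and> (\<forall>u\<in>V - {v}. f u = (1 - \<alpha>) / real (card (nbrs V E u)) * (\<Sum>w\<in>nbrs V E u. f w)) \<and> (\<forall>u. u \<notin> V \<longrightarrow> f u = 0)"
      by blast
  }
  {
    assume h: "f v = 1 \<and> (\<forall>u\<in>V - {v}. f u = (1 - \<alpha>) / real (card (nbrs V E u)) * (\<Sum>w\<in>nbrs V E u. f w)) \<and> (\<forall>u. u \<notin> V \<longrightarrow> f u = 0)"
    show "Tmap V E \<alpha> v f = f"
    proof
      fix u show "Tmap V E \<alpha> v f u = f u"
        using h unfolding Tmap_def by (cases "u = v"; cases "u \<in> V") auto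
    qed
  }
qed

lemma Tmap_unique:
  assumes fV: "finite V" and a: "0 < \<alpha>" "\<alpha> < 1" and v: "v \<in> V"
    and f: "Tmap V E \<alpha> v f = f" and h: "Tmap V E \<alpha> v h = h"
  shows "f = h"
proof -
  define K where "K = Max (insert 0 ((\<lambda>u. \<bar>f u - h u\<bar>) ` V))"
  have fin: "finite (insert 0 ((\<lambda>u. \<bar>f u - h u\<bar>) ` V))" using fV by simp
  have Kb: "\<forall>w. \<bar>f w - h w\<bar> \<le> K"
  proof
    fix w show "\<bar>f w - h w\<bar> \<le> K"
    proof (cases "w \<in> V")
      case True then show ?thesis unfolding K_def using fin by (intro Max_ge) auto
    next
      case False
      have wv: "w \<noteq> v" using False v by blast
      have "f w = Tmap V E \<alpha> v f w" "h w = Tmap V E \<alpha> v h w" using f h by simp_all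
      then have "f w = 0" "h w = 0" using False wv unfolding Tmap_def by simp_all
      then show ?thesis unfolding K_def using fin by (intro Max_ge) auto
    qed
  qed
  have K1: "\<forall>w. \<bar>f w - h w\<bar> \<le> (1 - \<alpha>) * K"
  proof
    fix w
    have "\<bar>f w - h w\<bar> = \<bar>Tmap V E \<alpha> v f w - Tmap V E \<alpha> v h w\<bar>" using f h by simp
    then show "\<bar>f w - h w\<bar> \<le> (1 - \<alpha>) * K" using Tmap_contr[OF fV a Kb, of E v w] by simp
  qed
  have "K \<in> insert 0 ((\<lambda>u. \<bar>f u - h u\<bar>) ` V)" unfolding K_def using fin by (intro Max_in) auto
  then have "K \<le> (1 - \<alpha>) * K" using K1 by auto
  then have aK: "\<alpha> * K \<le> 0" by (simp add: algebra_simps)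
  have "K \<le> 0"
  proof (rule ccontr)
    assume "\<not> K \<le> 0"
    then have "0 < \<alpha> * K" using a by simp
    then show False using aK by simp
  qed
  show ?thesis
  proof
    fix w
    have "\<bar>f w - h w\<bar> \<le> 0" using Kb \<open>K \<le> 0\<close> by (meson order_trans)
    then show "f w = h w" by simp
  qed
qed

definition iter where "iter V E \<alpha> v n = (Tmap V E \<alpha> v ^^ n) (\<lambda>_. 0)"

lemma iter_01:
  assumes fV: "finite V" and a: "0 < \<alpha>" "\<alpha> < 1"
  shows "0 \<le> iter V E \<alpha> v n u \<and> iter V E \<alpha> v n u \<le> 1"
proof (induction n arbitrary: u)
  case 0 then show ?case by (simp add: iter_def)
next
  case (Suc n) then show ?case using Tmap_01[OF fV a] by (simp add: iter_def)
qed

lemma iter_diff: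
  assumes fV: "finite V" and a: "0 < \<alpha>" "\<alpha> < 1"
  shows "\<bar>iter V E \<alpha> v (Suc n) u - iter V E \<alpha> v n u\<bar> \<le> (1 - \<alpha>) ^ n"
proof (induction n arbitrary: u)
  case 0 then show ?case using iter_01[OF fV a, of E v 1 u] by (simp add: iter_def)
next
  case (Suc n)
  have "\<bar>Tmap V E \<alpha> v (iter V E \<alpha> v (Suc n)) u - Tmap V E \<alpha> v (iter V E \<alpha> v n) u\<bar> \<le> (1 - \<alpha>) * (1 - \<alpha>) ^ n"
    using Tmap_contr[OF fV a] Suc by blast
  then show ?case by (simp add: iter_def)
qed

lemma Tmap_exists:
  assumes fV: "finite V" and a: "0 < \<alpha>" "\<alpha> < 1"
  shows "\<exists>f. Tmap V E \<alpha> v f = f \<and> (\<forall>u. 0 \<le> f u \<and> f u \<le> 1)"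
proof -
  define it where "it = iter V E \<alpha> v"
  define d where "d u k = it (Suc k) u - it k u" for u k
  have sd: "summable (d u)" for u
  proof (rule summable_comparison_test)
    show "\<exists>N. \<forall>n\<ge>N. norm (d u n) \<le> (1 - \<alpha>) ^ n"
      by (intro exI[of _ 0] allI impI) (simp add: d_def it_def iter_diff[OF fV a])
    show "summable (\<lambda>n. (1 - \<alpha>) ^ n)" using a by (intro summable_geometric) auto
  qed
  define L where "L u = suminf (d u)" for u
  have tel: "(\<Sum>k<n. d u k) = it n u" for n u
    unfolding d_def by (induction n) (auto simp: it_def iter_def)
  have conv: "(\<lambda>n. it n u) \<longlonglongrightarrow> L u" for u
    using summable_LIMSEQ[OF sd[of u]] unfolding tel L_def .
  have TL: "Tmap V E \<alpha> v L = L"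
  proof
    fix u
    have "(\<lambda>n. \<Sum>w\<in>nbrs V E u. it n w) \<longlonglongrightarrow> (\<Sum>w\<in>nbrs V E u. L w)"
      by (intro tendsto_sum) (use conv in blast)
    then have "(\<lambda>n. (1 - \<alpha>) / real (card (nbrs V E u)) * (\<Sum>w\<in>nbrs V E u. it n w)) \<longlonglongrightarrow> (1 - \<alpha>) / real (card (nbrs V E u)) * (\<Sum>w\<in>nbrs V E u. L w)"
      by (rule tendsto_mult_left)
    then have "(\<lambda>n. Tmap V E \<alpha> v (it n) u) \<longlonglongrightarrow> Tmap V E \<alpha> v L u"
      unfolding Tmap_def by (cases "u = v"; cases "u \<in> V") auto
    moreover have "(\<lambda>n. Tmap V E \<alpha> v (it n) u) = (\<lambda>n. it (Suc n) u)"
      by (simp add: it_def iter_def)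
    moreover have "(\<lambda>n. it (Suc n) u) \<longlonglongrightarrow> L u" using conv LIMSEQ_Suc by blast
    ultimately have t1: "(\<lambda>n. it (Suc n) u) \<longlonglongrightarrow> Tmap V E \<alpha> v L u" "(\<lambda>n. it (Suc n) u) \<longlonglongrightarrow> L u"
      by simp_all
    show "Tmap V E \<alpha> v L u = L u" by (rule LIMSEQ_unique[OF t1])
  qed
  have "0 \<le> L u \<and> L u \<le> 1" for u
  proof
    show "0 \<le> L u" by (rule LIMSEQ_le_const[OF conv[of u]]) (use iter_01[OF fV a] in \<open>auto simp: it_def\<close>)
    show "L u \<le> 1" by (rule LIMSEQ_le_const2[OF conv[of u]]) (use iter_01[OF fV a] in \<open>auto simp: it_def\<close>)
  qed
  then show ?thesis using TL by blast
qed

lemma phi_props: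
  assumes fV: "finite V" and a: "0 < \<alpha>" "\<alpha> < 1" and v: "v \<in> V"
  shows "Tmap V E \<alpha> v (phi V E \<alpha> v) = phi V E \<alpha> v" "0 \<le> phi V E \<alpha> v u" "phi V E \<alpha> v u \<le> 1"
proof -
  obtain f where f: "Tmap V E \<alpha> v f = f" "\<forall>u. 0 \<le> f u \<and> f u \<le> 1" using Tmap_exists[OF fV a] by blast
  have "phi V E \<alpha> v = f"
    unfolding phi_def
  proof (rule the_equality)
    show "f v = 1 \<and> (\<forall>u\<in>V - {v}. f u = (1 - \<alpha>) / real (card (nbrs V E u)) * (\<Sum>w\<in>nbrs V E u. f w)) \<and> (\<forall>u. u \<notin> V \<longrightarrow> f u = 0)"
      using f(1) Tmap_fix_iff[OF v] by blast
    fix g assume "g v = 1 \<and> (\<forall>u\<in>V - {v}. g u = (1 - \<alpha>) / real (card (nbrs V E u)) * (\<Sum>w\<in>nbrs V E u. g w)) \<and> (\<forall>u. u \<notin> V \<longrightarrow> g u = 0)"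
    then have "Tmap V E \<alpha> v g = g" using Tmap_fix_iff[OF v] by blast
    then show "g = f" using Tmap_unique[OF fV a v _ f(1)] by blast
  qed
  then show "Tmap V E \<alpha> v (phi V E \<alpha> v) = phi V E \<alpha> v" "0 \<le> phi V E \<alpha> v u" "phi V E \<alpha> v u \<le> 1"
    using f by auto
qed



lemma path_ex:
  assumes "R\<^sup>*\<^sup>* a b"
  shows "\<exists>ps. ps \<noteq> [] \<and> hd ps = a \<and> last ps = b \<and> distinct ps \<and> (\<forall>k. Suc k < length ps \<longrightarrow> R (ps!k) (ps!Suc k))"
  using assms
proof (induction rule: rtranclp_induct)
  case base
  then show ?case by (intro exI[of _ "[a]"]) auto
next
  case (step b c)
  then obtain ps where ps: "ps \<noteq> []" "hd ps = a" "last ps = b" "distinct ps"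
     "\<forall>k. Suc k < length ps \<longrightarrow> R (ps!k) (ps!Suc k)" by blast
  show ?case
  proof (cases "c \<in> set ps")
    case True
    then obtain k where k: "k < length ps" "ps ! k = c" by (meson in_set_conv_nth)
    define qs where "qs = take (Suc k) ps"
    have "qs \<noteq> []" using ps k unfolding qs_def by simp
    moreover have "hd qs = a" using ps k unfolding qs_def by (simp add: hd_take)
    moreover have "last qs = c" using k unfolding qs_def by (simp add: take_Suc_conv_app_nth)
    moreover have "distinct qs" using ps unfolding qs_def by simp
    moreover have "\<forall>m. Suc m < length qs \<longrightarrow> R (qs!m) (qs!Suc m)" using ps k unfolding qs_def by auto
    ultimately show ?thesis by blast
  next
    case False
    define qs where "qs = ps @ [c]"
    have "hd qs = a" using ps unfolding qs_def by simp
    moreover have "last qs = c" unfolding qs_def by simp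
    moreover have "distinct qs" using ps False unfolding qs_def by simp
    moreover have "\<forall>m. Suc m < length qs \<longrightarrow> R (qs!m) (qs!Suc m)"
    proof (intro allI impI)
      fix m assume m: "Suc m < length qs"
      show "R (qs!m) (qs!Suc m)"
      proof (cases "Suc m < length ps")
        case True then show ?thesis using ps m unfolding qs_def by (simp add: nth_append)
      next
        case False
        then have "m = length ps - 1" "Suc m = length ps" using m unfolding qs_def by auto
        then show ?thesis using ps step(2) unfolding qs_def by (simp add: nth_append last_conv_nth)
      qed
    qed
    ultimately show ?thesis unfolding qs_def by blast
  qed
qed

lemma graph_sym: "graph V E \<Longrightarrow> E a b \<Longrightarrow> E b a" unfolding graph_def by blast
lemma graph_V: "graph V E \<Longrightarrow> E a b \<Longrightarrow> a \<in> V \<and> b \<in> V" unfolding graph_def by blast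
lemma graph_irr: "graph V E \<Longrightarrow> E a b \<Longrightarrow> a \<noteq> b" unfolding graph_def by blast

lemma no_cycle:
  assumes t: "tree V E" and i: "i \<in> nbrs V E v" and j: "j \<in> nbrs V E v" and ij: "i \<noteq> j"
    and p: "(\<lambda>a b. E a b \<and> a \<noteq> v \<and> b \<noteq> v)\<^sup>*\<^sup>* i j"
  shows False
proof -
  have g: "graph V E" using t unfolding tree_def by blast
  obtain ps where ps: "ps \<noteq> []" "hd ps = i" "last ps = j" "distinct ps"
    "\<forall>k. Suc k < length ps \<longrightarrow> E (ps!k) (ps!Suc k) \<and> ps!k \<noteq> v \<and> ps!Suc k \<noteq> v"
    using path_ex[OF p] by blast
  have Ei: "E v i" and Ej: "E v j" using i j unfolding nbrs_def by auto
  have len: "length ps \<ge> 2"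
  proof (rule ccontr)
    assume "\<not> 2 \<le> length ps"
    moreover have "length ps \<noteq> 0" using ps(1) by simp
    ultimately have "length ps = 1" by linarith
    then have "hd ps = last ps" by (cases ps) auto
    then show False using ps ij by simp
  qed
  have nv: "x \<noteq> v" if xin: "x \<in> set ps" for x
  proof -
    obtain k where k: "k < length ps" "ps ! k = x" using xin by (meson in_set_conv_nth)
    show ?thesis
    proof (cases k)
      case 0 then show ?thesis using k ps(1,2) Ei graph_irr[OF g] by (metis hd_conv_nth)
    next
      case (Suc m) then show ?thesis using k ps(5) by auto
    qed
  qed
  define cs where "cs = v # ps"
  have "is_cycle E cs"
    unfolding is_cycle_def
  proof (intro conjI allI impI)
    show "3 \<le> length cs" using len unfolding cs_def by simp
    show "distinct cs" using ps(4) nv unfolding cs_def by auto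
    show "E (last cs) (hd cs)" using ps(1,3) Ej graph_sym[OF g] unfolding cs_def by simp
    fix k assume k: "Suc k < length cs"
    show "E (cs ! k) (cs ! Suc k)"
    proof (cases k)
      case 0 then show ?thesis using Ei ps(1,2) unfolding cs_def by (simp add: hd_conv_nth)
    next
      case (Suc m) then show ?thesis using ps(5) k unfolding cs_def by auto
    qed
  qed
  then show False using t unfolding tree_def by blast
qed

lemma sub_sym:
  assumes g: "graph V E" and p: "(\<lambda>a b. E a b \<and> a \<noteq> v \<and> b \<noteq> v)\<^sup>*\<^sup>* a b"
  shows "(\<lambda>a b. E a b \<and> a \<noteq> v \<and> b \<noteq> v)\<^sup>*\<^sup>* b a"
  using p
proof (induction rule: rtranclp_induct)
  case base then show ?case by simp
next
  case (step b c)
  then have "(\<lambda>a b. E a b \<and> a \<noteq> v \<and> b \<noteq> v) c b" using graph_sym[OF g] by blast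
  then show ?case using step(3) by (rule converse_rtranclp_into_rtranclp)
qed

lemma sub_V:
  assumes g: "graph V E" and p: "(\<lambda>a b. E a b \<and> a \<noteq> v \<and> b \<noteq> v)\<^sup>*\<^sup>* a b" and a: "a \<in> V"
  shows "b \<in> V"
  using p a
  by (induction rule: rtranclp_induct) (auto dest: graph_V[OF g])

lemma root_exists:
  assumes t: "tree V E" and v: "v \<in> V" and u: "u \<in> W_set V E v"
  shows "\<exists>i\<in>nbrs V E v. u \<in> subtree E v i - {i}"
proof -
  have g: "graph V E" using t unfolding tree_def by blast
  have "E\<^sup>*\<^sup>* v u" using t v u unfolding tree_def connected_graph_def W_set_def by blast
  then have "u = v \<or> (\<exists>i\<in>nbrs V E v. (\<lambda>a b. E a b \<and> a \<noteq> v \<and> b \<noteq> v)\<^sup>*\<^sup>* i u)"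
  proof (induction rule: rtranclp_induct)
    case base then show ?case by simp
  next
    case (step b c)
    show ?case
    proof (cases "c = v")
      case True then show ?thesis by simp
    next
      case False
      show ?thesis
      proof (cases "b = v")
        case True
        then have "c \<in> nbrs V E v" using step(2) graph_V[OF g] unfolding nbrs_def by auto
        then show ?thesis by blast
      next
        case bv: False
        then obtain i where i: "i \<in> nbrs V E v" "(\<lambda>a b. E a b \<and> a \<noteq> v \<and> b \<noteq> v)\<^sup>*\<^sup>* i b" using step(3) by blast
        have "(\<lambda>a b. E a b \<and> a \<noteq> v \<and> b \<noteq> v)\<^sup>*\<^sup>* i c"
          using i(2) step(2) bv False by (simp add: rtranclp.rtrancl_into_rtrancl)
        then show ?thesis using i(1) by blast
      qed
    qed
  qed
  moreover have "u \<noteq> v" "u \<notin> nbrs V E v" using u unfolding W_set_def by auto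
  ultimately show ?thesis unfolding subtree_def by auto
qed

lemma root_unique:
  assumes t: "tree V E" and i: "i \<in> nbrs V E v" and j: "j \<in> nbrs V E v"
    and ui: "u \<in> subtree E v i" and uj: "u \<in> subtree E v j"
  shows "i = j"
proof (rule ccontr)
  assume ij: "i \<noteq> j"
  have g: "graph V E" using t unfolding tree_def by blast
  have "(\<lambda>a b. E a b \<and> a \<noteq> v \<and> b \<noteq> v)\<^sup>*\<^sup>* i j"
    using ui sub_sym[OF g, of v j u] uj unfolding subtree_def by (metis (no_types, lifting) mem_Collect_eq rtranclp_trans)
  then show False using no_cycle[OF t i j ij] by blast
qed



lemma phi_sub_le:
  assumes t: "tree V E" and a: "0 < \<alpha>" "\<alpha> < 1" and v: "v \<in> V" and j: "j \<in> nbrs V E v"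
    and uj: "u \<in> subtree E v j" and uW: "u \<in> W_set V E v"
  shows "phi V E \<alpha> v u \<le> phi V E \<alpha> v j"
proof -
  have g: "graph V E" using t unfolding tree_def by blast
  have fV: "finite V" using g unfolding graph_def by blast
  define f where "f = phi V E \<alpha> v"
  note fp = phi_props[OF fV a v, of E, folded f_def]
  define T where "T = subtree E v j \<inter> W_set V E v"
  have fT: "finite T" using fV unfolding T_def W_set_def by auto
  have uT: "u \<in> T" using uj uW unfolding T_def by blast
  define M where "M = Max (f ` T)"
  have Mge: "f w \<le> M" if "w \<in> T" for w unfolding M_def using fT that by (intro Max_ge) auto
  obtain u0 where u0: "u0 \<in> T" "f u0 = M" unfolding M_def using fT uT
    by (metis (mono_tags, lifting) Max_in empty_iff finite_imageI image_iff image_is_empty)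
  have "M \<le> f j"
  proof (rule ccontr)
    assume "\<not> M \<le> f j"
    then have Mj: "f j < M" by simp
    define N where "N = nbrs V E u0"
    have u0W: "u0 \<in> W_set V E v" "u0 \<in> subtree E v j" using u0 unfolding T_def by auto
    have u0V: "u0 \<in> V - {v}" using u0W unfolding W_set_def by auto
    have Nle: "f w \<le> M" if w: "w \<in> N" for w
    proof -
      have Ew: "E u0 w" "w \<in> V" using w unfolding N_def nbrs_def by auto
      have wv: "w \<noteq> v"
      proof
        assume "w = v"
        then have "E v u0" using Ew graph_sym[OF g] by blast
        then have "u0 \<in> nbrs V E v" using u0V unfolding nbrs_def by auto
        then show False using u0W unfolding W_set_def by auto
      qed
      have wsub: "w \<in> subtree E v j"
        using u0W(2) Ew(1) wv u0V unfolding subtree_def by (auto intro: rtranclp.rtrancl_into_rtrancl)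
      show ?thesis
      proof (cases "w \<in> nbrs V E v")
        case True
        have "w \<in> subtree E v w" unfolding subtree_def by simp
        then have "w = j" using root_unique[OF t True j _ wsub] by blast
        then show ?thesis using Mj by simp
      next
        case False
        then have "w \<in> T" using wsub Ew(2) wv unfolding T_def W_set_def by auto
        then show ?thesis using Mge by blast
      qed
    qed
    have fN: "finite N" unfolding N_def by (rule finite_nbrs[OF fV])
    have fu0: "f u0 = (1 - \<alpha>) / real (card N) * (\<Sum>w\<in>N. f w)"
      using fp(1) u0V unfolding N_def by (metis Tmap_def DiffD1 DiffD2 singletonI)
    have f0: "0 \<le> f j" using fp(2) by blast
    show False
    proof (cases "card N = 0")
      case True then show ?thesis using fu0 u0 Mj f0 by simp
    next
      case False
      have "(\<Sum>w\<in>N. f w) \<le> of_nat (card N) * M" by (rule sum_bounded_above) (use Nle in blast)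
      then have "f u0 \<le> (1 - \<alpha>) / real (card N) * (real (card N) * M)"
        unfolding fu0 using a by (intro mult_left_mono) auto
      also have "\<dots> = (1 - \<alpha>) * M" using False by simp
      finally have "M \<le> (1 - \<alpha>) * M" using u0 by simp
      then have "\<alpha> * M \<le> 0" by (simp add: algebra_simps)
      then have "M \<le> 0" using a by (simp add: mult_le_0_iff)
      then show False using Mj f0 by simp
    qed
  qed
  then show ?thesis using Mge uT unfolding f_def by fastforce
qed



lemma sum_ind_mult:
  assumes "finite A" "X \<subseteq> A"
  shows "(\<Sum>i\<in>A. f i * ind X i) = (\<Sum>i\<in>X. f i)"
proof -
  have "(\<Sum>i\<in>A. f i * ind X i) = (\<Sum>i\<in>A. if i \<in> X then f i else 0)"
    by (rule sum.cong) (auto simp: ind_def)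
  also have "\<dots> = (\<Sum>i\<in>A \<inter> X. f i)" using assms(1) by (simp add: sum.inter_restrict)
  also have "A \<inter> X = X" using assms(2) by blast
  finally show ?thesis .
qed

lemma sum_ind:
  assumes "finite A" "X \<subseteq> A"
  shows "(\<Sum>i\<in>A. ind X i) = real (card X)"
  using sum_ind_mult[OF assms, of "\<lambda>_. 1"] by simp

theorem lemma4p3:
  fixes V :: "'a set" and E :: "'a \<Rightarrow> 'a \<Rightarrow> bool" and \<alpha> :: real
    and q :: "'a \<Rightarrow> real" and v :: 'a and ws :: "'a list" and l :: nat
  assumes "tree V E"
    and "0 < \<alpha>" and "\<alpha> < 1"
    and "\<forall>u\<in>V. 0 \<le> q u" and "(\<Sum>u\<in>V. q u) = 1"
    and "v \<in> V"
    and "distinct ws" and "set ws = W_set V E v"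
    and "sorted_wrt (\<lambda>a b. e_const V E \<alpha> v a \<ge> e_const V E \<alpha> v b) ws"
    and "1 \<le> l" and "l \<le> card V - 1"
  shows "Max {F V E \<alpha> q v (ind X) (ind Y) | X Y.
                X \<subseteq> nbrs V E v \<and> X \<noteq> {} \<and> Y \<subseteq> W_set V E v \<and> card X + card Y = l}
       = Max {F V E \<alpha> q v (ind X) (ind (set (take l2 ws))) | X l1 l2.
                X \<subseteq> nbrs V E v \<and> card X = l1 \<and> 1 \<le> l1 \<and> l1 \<le> card (nbrs V E v)
                \<and> l2 \<le> card (W_set V E v) \<and> l1 + l2 = l}"
proof -
  note t = assms(1) and a = assms(2,3) and v = assms(6)
  have g: "graph V E" using t unfolding tree_def by blast
  have fV: "finite V" using g unfolding graph_def by (rule conjunct1)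
  define G where "G = nbrs V E v"
  define W where "W = W_set V E v"
  have fG: "finite G" unfolding G_def by (rule finite_nbrs[OF fV])
  have fW: "finite W" unfolding W_def W_set_def using fV by simp
  have GV: "G \<subseteq> V" unfolding G_def nbrs_def by auto
  define ph where "ph = phi V E \<alpha> v"
  note php = phi_props[OF fV a v, of E, folded ph_def]
  define r where "r u = (THE i. i \<in> G \<and> u \<in> subtree E v i - {i})" for u
  have r: "r u \<in> G \<and> u \<in> subtree E v (r u) - {r u}" if "u \<in> W" for u
  proof -
    have "\<exists>!i. i \<in> G \<and> u \<in> subtree E v i - {i}"
      using root_exists[OF t v that[unfolded W_def]] root_unique[OF t] unfolding G_def by blast
    then show ?thesis unfolding r_def by (rule theI')
  qed
  have rkey: "(u \<in> subtree E v i - {i}) \<longleftrightarrow> r u = i" if uW: "u \<in> W" and iG: "i \<in> G" for u i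
  proof -
    have ru: "r u \<in> G" "u \<in> subtree E v (r u) - {r u}" using r[OF uW] by auto
    show ?thesis
    proof
      assume h: "u \<in> subtree E v i - {i}"
      have "i = r u" by (rule root_unique[OF t]) (use iG ru h in \<open>auto simp: G_def\<close>)
      then show "r u = i" by simp
    next
      assume "r u = i" then show "u \<in> subtree E v i - {i}" using ru by simp
    qed
  qed
  define aa where "aa = a_const V E \<alpha> q v"
  define cc where "cc = c_const V E \<alpha> v"
  define ee where "ee = e_const V E \<alpha> v"
  have subV: "u \<in> V" if "i \<in> G" "u \<in> subtree E v i" for i u
    using sub_V[OF g, of v i u] that GV unfolding subtree_def by blast
  have a0: "\<forall>i\<in>G. 0 \<le> aa i"
  proof
    fix i assume i: "i \<in> G"
    show "0 \<le> aa i" unfolding aa_def a_const_def using a assms(4) php(2) subV[OF i]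
      by (intro mult_nonneg_nonneg sum_nonneg) (auto simp: ph_def)
  qed
  have c01: "\<forall>i\<in>G. 0 \<le> cc i \<and> cc i < 1"
  proof
    fix i
    have "0 \<le> ph i" "ph i \<le> 1" using php by auto
    then have h1: "(1 - \<alpha>) * ph i \<le> 1 - \<alpha>" using a by (simp add: mult_left_le)
    have h2: "0 \<le> (1 - \<alpha>) * ph i" using a \<open>0 \<le> ph i\<close> by simp
    show "0 \<le> cc i \<and> cc i < 1" unfolding cc_def c_const_def ph_def[symmetric]
      using a h1 h2 by linarith
  qed
  have e01: "\<forall>u\<in>W. 0 \<le> ee u \<and> ee u \<le> 1"
  proof
    fix u
    have "0 \<le> ph u" "ph u \<le> 1" using php by auto
    then have h1: "(1 - \<alpha>) * ph u \<le> 1 - \<alpha>" using a by (simp add: mult_left_le)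
    have h2: "0 \<le> (1 - \<alpha>) * ph u" using a \<open>0 \<le> ph u\<close> by simp
    show "0 \<le> ee u \<and> ee u \<le> 1" unfolding ee_def e_const_def ph_def[symmetric]
      using a h1 h2 by linarith
  qed
  have rG: "\<forall>u\<in>W. r u \<in> G \<and> ee u \<le> cc (r u)"
  proof
    fix u assume u: "u \<in> W"
    have "ph u \<le> ph (r u)" unfolding ph_def
      using phi_sub_le[OF t a v, of "r u" u] r[OF u] u unfolding G_def W_def by blast
    then show "r u \<in> G \<and> ee u \<le> cc (r u)" using r[OF u] a
      unfolding ee_def cc_def e_const_def c_const_def ph_def[symmetric] by (simp add: mult_left_mono)
  qed
  define D where "D X Y = (\<Sum>i\<in>X. 1 - cc i) + (\<Sum>u\<in>Y. 1 - ee u * ind X (r u))" for X Y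
  define AA where "AA X = (\<Sum>i\<in>X. aa i)" for X
  have Feq: "F V E \<alpha> q v (ind X) (ind Y) = real (card X + card Y) * (AA X / D X Y)"
    if X: "X \<subseteq> G" and Y: "Y \<subseteq> W" for X Y
  proof -
    have fY: "finite Y" using Y fW finite_subset by blast
    have inner: "(\<Sum>u\<in>subtree E v i - {i}. (1 - ee u * ind X i) * ind Y u)
        = (\<Sum>u\<in>{u \<in> Y. r u = i}. 1 - ee u * ind X (r u))" if i: "i \<in> G" for i
    proof -
      have fS: "finite (subtree E v i - {i})"
        using subV[OF i] fV by (meson Diff_subset finite_subset subsetI)
      have "(\<Sum>u\<in>subtree E v i - {i}. (1 - ee u * ind X i) * ind Y u)
          = (\<Sum>u\<in>subtree E v i - {i}. if u \<in> Y then 1 - ee u * ind X i else 0)"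
        by (rule sum.cong) (auto simp: ind_def)
      also have "\<dots> = (\<Sum>u\<in>(subtree E v i - {i}) \<inter> Y. 1 - ee u * ind X i)"
        using fS by (simp add: sum.inter_restrict)
      also have "(subtree E v i - {i}) \<inter> Y = {u \<in> Y. r u = i}"
        using rkey[OF _ i] Y by blast
      also have "(\<Sum>u\<in>{u \<in> Y. r u = i}. 1 - ee u * ind X i) = (\<Sum>u\<in>{u \<in> Y. r u = i}. 1 - ee u * ind X (r u))"
        by (rule sum.cong) auto
      finally show ?thesis .
    qed
    have den: "(\<Sum>i\<in>G. (1 - cc i) * ind X i + (\<Sum>u\<in>subtree E v i - {i}. (1 - ee u * ind X i) * ind Y u))
        = D X Y"
    proof -
      have "(\<Sum>i\<in>G. (1 - cc i) * ind X i + (\<Sum>u\<in>subtree E v i - {i}. (1 - ee u * ind X i) * ind Y u))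
         = (\<Sum>i\<in>G. (1 - cc i) * ind X i) + (\<Sum>i\<in>G. (\<Sum>u\<in>{u \<in> Y. r u = i}. 1 - ee u * ind X (r u)))"
        using inner by (simp add: sum.distrib)
      also have "(\<Sum>i\<in>G. (1 - cc i) * ind X i) = (\<Sum>i\<in>X. 1 - cc i)" using sum_ind_mult[OF fG X] .
      also have "(\<Sum>i\<in>G. (\<Sum>u\<in>{u \<in> Y. r u = i}. 1 - ee u * ind X (r u))) = (\<Sum>u\<in>Y. 1 - ee u * ind X (r u))"
        using fY fG r Y by (intro sum.group) auto
      finally show ?thesis unfolding D_def .
    qed
    show ?thesis unfolding F_def G_def[symmetric] W_def[symmetric] aa_def[symmetric] cc_def[symmetric] ee_def[symmetric]
      using den sum_ind[OF fG X] sum_ind[OF fW Y] sum_ind_mult[OF fG X, of aa] unfolding AA_def by simp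
  qed
  note ex = exch[OF fG assms(8)[folded W_def] assms(7) assms(9)[folded ee_def] a0 c01 e01 rG]
  define S1 where "S1 = {F V E \<alpha> q v (ind X) (ind Y) | X Y.
                X \<subseteq> nbrs V E v \<and> X \<noteq> {} \<and> Y \<subseteq> W_set V E v \<and> card X + card Y = l}"
  define S2 where "S2 = {F V E \<alpha> q v (ind X) (ind (set (take l2 ws))) | X l1 l2.
                X \<subseteq> nbrs V E v \<and> card X = l1 \<and> 1 \<le> l1 \<and> l1 \<le> card (nbrs V E v)
                \<and> l2 \<le> card (W_set V E v) \<and> l1 + l2 = l}"
  have cW: "card W = length ws" using assms(7,8) distinct_card unfolding W_def by metis
  have S21: "S2 \<subseteq> S1"
  proof
    fix s assume "s \<in> S2"
    then obtain X l2 where X: "X \<subseteq> G" "1 \<le> card X" "l2 \<le> card W" "card X + l2 = l"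
      and s: "s = F V E \<alpha> q v (ind X) (ind (set (take l2 ws)))"
      unfolding S2_def G_def W_def by blast
    have "set (take l2 ws) \<subseteq> W" using assms(8) set_take_subset[of l2 ws] unfolding W_def by simp
    moreover have "card (set (take l2 ws)) = l2" using X(3) cW assms(7) by (simp add: distinct_card)
    moreover have "X \<noteq> {}" using X(2) by auto
    ultimately show "s \<in> S1" unfolding S1_def G_def[symmetric] W_def[symmetric] using X s
      by (intro CollectI exI[of _ X] exI[of _ "set (take l2 ws)"]) simp
  qed
  have fS1: "finite S1"
  proof -
    have "S1 \<subseteq> (\<lambda>(X, Y). F V E \<alpha> q v (ind X) (ind Y)) ` (Pow G \<times> Pow W)"
    proof
      fix s assume "s \<in> S1"
      then obtain X Y where XY: "X \<subseteq> G" "Y \<subseteq> W" "s = F V E \<alpha> q v (ind X) (ind Y)"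
        unfolding S1_def G_def[symmetric] W_def[symmetric] by blast
      show "s \<in> (\<lambda>(X, Y). F V E \<alpha> q v (ind X) (ind Y)) ` (Pow G \<times> Pow W)"
        by (rule image_eqI[of _ _ "(X, Y)"]) (use XY in simp_all)
    qed
    then show ?thesis by (rule finite_subset) (use fG fW in simp)
  qed
  have fS2: "finite S2" using S21 fS1 by (rule finite_subset)
  have GW: "card V = 1 + card G + card W"
  proof -
    have "V = insert v (G \<union> W)" using GV v unfolding W_def W_set_def G_def by auto
    moreover have "v \<notin> G \<union> W" "G \<inter> W = {}" unfolding G_def W_def W_set_def nbrs_def
      using graph_irr[OF g] by auto
    ultimately show ?thesis using fG fW by (simp add: card_Un_disjoint)
  qed
  have Gne: "G \<noteq> {}"
  proof -
    have "card V \<ge> 2" using assms(10,11) by linarith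
    then have "card (V - {v}) > 0" using fV v by simp
    then have "V - {v} \<noteq> {}" by (metis card.empty less_irrefl)
    then obtain w where w: "w \<in> V" "w \<noteq> v" by blast
    have cg: "connected_graph V E" using t unfolding tree_def by blast
    have "E\<^sup>*\<^sup>* v w" using cg v w unfolding connected_graph_def by blast
    then obtain y where "E v y" using w(2) by (metis converse_rtranclpE)
    then have "y \<in> G" using graph_V[OF g] unfolding G_def nbrs_def by auto
    then show ?thesis by blast
  qed
  have S2ne: "S2 \<noteq> {}"
  proof -
    define l1 where "l1 = max 1 (l - card W)"
    have cG: "card G \<ge> 1" using Gne fG by (simp add: Suc_le_eq card_gt_0_iff)
    have l1: "1 \<le> l1" "l1 \<le> card G" "l1 \<le> l" "l - l1 \<le> card W"
      using cG assms(10,11) GW unfolding l1_def by auto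
    obtain X where X: "X \<subseteq> G" "card X = l1" using l1(2) obtain_subset_with_card_n by metis
    have "F V E \<alpha> q v (ind X) (ind (set (take (l - l1) ws))) \<in> S2"
      unfolding S2_def G_def[symmetric] W_def[symmetric] using X l1
      by (intro CollectI exI[of _ X] exI[of _ l1] exI[of _ "l - l1"]) auto
    then show ?thesis by blast
  qed
  have S1ne: "S1 \<noteq> {}" using S21 S2ne by blast
  have le1: "Max S1 \<le> Max S2"
  proof -
    have "Max S1 \<in> S1" using fS1 S1ne by (rule Max_in)
    then obtain X Y where XY: "X \<subseteq> G" "X \<noteq> {}" "Y \<subseteq> W" "card X + card Y = l"
      and m: "Max S1 = F V E \<alpha> q v (ind X) (ind Y)"
      unfolding S1_def G_def[symmetric] W_def[symmetric] by blast
    obtain X' k where X': "X' \<subseteq> G" "X' \<noteq> {}" "k \<le> card W" "card X' + k = card X + card Y"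
      "AA X / D X Y \<le> AA X' / D X' (set (take k ws))"
      using ex[OF XY(1-3)] unfolding AA_def D_def by blast
    have PW: "set (take k ws) \<subseteq> W" using assms(8) set_take_subset[of k ws] unfolding W_def by simp
    have cP: "card (set (take k ws)) = k" using X'(3) cW assms(7) by (simp add: distinct_card)
    have "real (card X + card Y) * (AA X / D X Y) \<le> real (card X' + k) * (AA X' / D X' (set (take k ws)))"
      unfolding X'(4) by (rule mult_left_mono[OF X'(5)]) simp
    then have "Max S1 \<le> F V E \<alpha> q v (ind X') (ind (set (take k ws)))"
      unfolding m Feq[OF XY(1,3)] Feq[OF X'(1) PW] cP .
    moreover have "F V E \<alpha> q v (ind X') (ind (set (take k ws))) \<in> S2"
    proof -
      have "finite X'" using X'(1) fG by (rule finite_subset)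
      then have "0 < card X'" using X'(2) by (simp add: card_gt_0_iff)
      then have "1 \<le> card X'" by simp
      moreover have "card X' \<le> card G" using X'(1) fG card_mono by blast
      ultimately show ?thesis unfolding S2_def G_def[symmetric] W_def[symmetric] using X' XY(4)
        by (intro CollectI exI[of _ X'] exI[of _ "card X'"] exI[of _ k]) auto
    qed
    ultimately show ?thesis using fS2 by (meson Max_ge order_trans)
  qed
  have le2: "Max S2 \<le> Max S1"
    using S21 fS1 S2ne by (meson Max_mono)
  show ?thesis using le1 le2 unfolding S1_def S2_def by linarith
qed


end
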